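(* Let $M=15$, let $1\le i_1<i_2<\dots<i_k$ and $j_1,\dots,j_k$ be positive integers such that $i_{l+1}-i_l\ge j_l$ for each $1\le l<k$. Then $\widehat Q_{i_1\cdots i_k}^{j_1\cdots j_k}$ consists of at most $M^k2^{\,i_k-j_1-j_2-\cdots-j_{k-1}}$ intervals in $\mathcal D_{i_k+j_k}$.
   Context: $\mathbb T=\mathbb R/\mathbb Z\cong[0,1)$, $Tx=2x\bmod1$, $d$ the usual distance on $\mathbb T$. $\mathcal D_n$ is the collection of dyadic intervals $[m/2^n,(m+1)/2^n)$. For $i,j\ge1$, $Q_i^j=\{x:d(T^ix,x)\le2^{-j}\}$ and $\widehat Q_i^j$ is the union of all intervals of $\mathcal D_{i+j}$ that intersect $Q_i^j$. Then $\widehat Q_{i_1\cdots i_k}^{j_1\cdots j_k}:=\bigcap_{\nu=1}^k\widehat Q_{i_\nu}^{j_\nu}$. *)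

theory Defs
  imports Complex_Main
begin

text \<open>The circle T = R/Z is represented by [0,1).\<close>

definition Tmap :: "real \<Rightarrow> real" where
  "Tmap x = frac (2 * x)"

definition dT :: "real \<Rightarrow> real \<Rightarrow> real" where
  "dT x y = min (frac (x - y)) (1 - frac (x - y))"

definition dyad :: "nat \<Rightarrow> nat \<Rightarrow> real set" where
  "dyad n m = {real m / 2 ^ n ..< (real m + 1) / 2 ^ n}"

definition Dn :: "nat \<Rightarrow> real set set" where
  "Dn n = dyad n ` {..<2 ^ n}"

definition Q :: "nat \<Rightarrow> nat \<Rightarrow> real set" where
  "Q i j = {x \<in> {0..<1}. dT ((Tmap ^^ i) x) x \<le> (1/2) ^ j}"

definition Qhat :: "nat \<Rightarrow> nat \<Rightarrow> real set" where
  "Qhat i j = \<Union> {I \<in> Dn (i + j). I \<inter> Q i j \<noteq> {}}"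

text \<open>Intersection of Qhat (i l) (j l) over l < k (0-indexed).\<close>
definition Qhat_inter :: "nat \<Rightarrow> (nat \<Rightarrow> nat) \<Rightarrow> (nat \<Rightarrow> nat) \<Rightarrow> real set" where
  "Qhat_inter k i j = (\<Inter> l \<in> {..<k}. Qhat (i l) (j l))"

end

theory Submission
  imports Defs
begin

lemma spread:
  fixes S :: "int set" and q L :: int
  assumes q: "q > 0" and h: "\<And>x y. x \<in> S \<Longrightarrow> y \<in> S \<Longrightarrow> (x - y) * q \<le> L"
  shows "finite S \<and> card S \<le> nat (L div q + 1)"
proof (cases "S = {}")
  case True then show ?thesis by simp
next
  case False
  have hd: "x - y \<le> L div q" if "x \<in> S" "y \<in> S" for x y
  proof -
    have "((x - y) * q) div q \<le> L div q" using zdiv_mono1[OF h[OF that] q] .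
    then show ?thesis using q by simp
  qed
  obtain y0 where y0: "y0 \<in> S" using False by blast
  have "S \<subseteq> {y0 - L div q .. y0 + L div q}"
    using hd y0 by fastforce
  then have fin: "finite S" using finite_subset by blast
  define mn where "mn = Min S"
  have mn: "mn \<in> S" "\<And>x. x \<in> S \<Longrightarrow> mn \<le> x" using fin False by (auto simp: mn_def)
  have "S \<subseteq> {mn .. mn + L div q}" using hd mn by fastforce
  then have "card S \<le> card {mn .. mn + L div q}" by (rule card_mono[rotated]) simp
  then show ?thesis using fin by simp
qed

lemma frac_double: "frac (2 * frac y) = frac (2 * (y::real))"
proof -
  have "2 * frac y = 2 * y + of_int (- 2 * \<lfloor>y\<rfloor>)" by (simp add: frac_def)
  then show ?thesis by (simp only: frac_add_of_int_right)
qed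

lemma Tmap_iter: "(Tmap ^^ n) x = frac (2 ^ n * x)" if "x \<in> {0..<1}"
proof (induction n)
  case 0 then show ?case using that by simp
next
  case (Suc n) then show ?case by (simp add: Tmap_def frac_double mult.assoc)
qed

lemma dT_int: assumes "dT a b \<le> \<delta>" shows "\<exists>p::int. \<bar>a - b - of_int p\<bar> \<le> \<delta>"
proof (cases "frac (a - b) \<le> 1 - frac (a - b)")
  case True
  then have "frac (a - b) \<le> \<delta>" using assms by (simp add: dT_def)
  then show ?thesis by (intro exI[of _ "\<lfloor>a - b\<rfloor>"]) (simp add: frac_def)
next
  case False
  then have "1 - frac (a - b) \<le> \<delta>" using assms by (simp add: dT_def)
  moreover have "frac (a - b) < 1" by (rule frac_lt_1)
  ultimately show ?thesis by (intro exI[of _ "\<lfloor>a - b\<rfloor> + 1"]) (simp add: frac_def)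
qed

definition Bset :: "nat \<Rightarrow> nat \<Rightarrow> nat set" where
  "Bset i j = {m. \<exists>p::int. p * 2^(i+j) - 2^(i+1) + 1 \<le> (2^i - 1) * int m \<and> (2^i - 1) * int m \<le> p * 2^(i+j) + 2^i}"

lemma Q_B: assumes xd: "x \<in> dyad (i+j) m" and xq: "x \<in> Q i j" shows "m \<in> Bset i j"
proof -
  have x01: "x \<in> {0..<1}" and dq: "dT ((Tmap ^^ i) x) x \<le> (1/2)^j" using xq by (auto simp: Q_def)
  then have "dT (frac (2^i * x)) x \<le> (1/2)^j" using Tmap_iter by simp
  then obtain p :: int where p: "\<bar>frac (2^i * x) - x - of_int p\<bar> \<le> (1/2)^j" using dT_int by blast
  define P0 where "P0 = p + \<lfloor>2^i * x\<rfloor>"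
  have h1: "\<bar>(2^i - 1) * x - of_int P0\<bar> \<le> (1/2)^j"
    using p by (simp add: P0_def frac_def algebra_simps)
  define u where "u = 2^(i+j) * x"
  have mu: "real m \<le> u" "u < real m + 1" using xd by (auto simp: dyad_def u_def field_simps)
  have "\<bar>(2^i - 1) * u - of_int P0 * 2^(i+j)\<bar> = 2^(i+j) * \<bar>(2^i - 1) * x - of_int P0\<bar>"
  proof -
    have "(2^i - 1) * u - of_int P0 * 2^(i+j) = 2^(i+j) * ((2^i - 1) * x - of_int P0)"
      by (simp add: u_def algebra_simps)
    then show ?thesis by (simp add: abs_mult)
  qed
  also have "\<dots> \<le> 2^(i+j) * (1/2)^j" using h1 by (intro mult_left_mono) auto
  also have "\<dots> = 2^i" by (simp add: power_add power_one_over)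
  finally have h2: "\<bar>(2^i - 1) * u - of_int P0 * 2^(i+j)\<bar> \<le> (2::real)^i" .
  have a0: "(0::real) \<le> 2^i - 1" by simp
  have "(2^i - 1) * real m \<le> (2^i - 1) * u" using mu a0 by (intro mult_left_mono) auto
  moreover have "(2^i - 1) * u \<le> (2^i - 1) * (real m + 1)" using mu a0 by (intro mult_left_mono) auto
  ultimately have r1: "real_of_int (P0 * 2^(i+j) - 2^(i+1) + 1) \<le> real_of_int ((2^i - 1) * int m)"
    and r2: "real_of_int ((2^i - 1) * int m) \<le> real_of_int (P0 * 2^(i+j) + 2^i)"
    using h2 by (auto simp: algebra_simps abs_le_iff)
  show ?thesis unfolding Bset_def using r1 r2 by (intro CollectI exI[of _ P0]) (simp only: of_int_le_iff)
qed

lemma dyad_iff: "x \<in> dyad n m \<longleftrightarrow> 0 \<le> x \<and> \<lfloor>2^n * x\<rfloor> = int m"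
proof -
  have "x \<in> dyad n m \<longleftrightarrow> real m \<le> 2^n * x \<and> 2^n * x < real m + 1"
    by (simp add: dyad_def field_simps)
  also have "\<dots> \<longleftrightarrow> \<lfloor>2^n * x\<rfloor> = int m" by (simp add: floor_eq_iff)
  also have "\<dots> \<longleftrightarrow> 0 \<le> x \<and> \<lfloor>2^n * x\<rfloor> = int m"
  proof
    assume a: "\<lfloor>2^n * x\<rfloor> = int m"
    then have "0 \<le> \<lfloor>2^n * x\<rfloor>" by simp
    then have "0 \<le> 2^n * x" by simp
    moreover have "0 < (2::real)^n" by simp
    ultimately show "0 \<le> x \<and> \<lfloor>2^n * x\<rfloor> = int m" using a by (smt (verit) zero_le_mult_iff)
  qed simp
  finally show ?thesis .
qed

lemma dyad_pt: "real m / 2^n \<in> dyad n m"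
  by (simp add: dyad_def divide_right_mono divide_strict_right_mono)

lemma dyad_01: "m < 2^n \<Longrightarrow> dyad n m \<subseteq> {0..<1}"
proof
  fix x assume m: "m < 2^n" and x: "x \<in> dyad n m"
  have "real m + 1 \<le> 2^n" using m by (metis Suc_leI of_nat_Suc of_nat_le_iff of_nat_numeral of_nat_power add.commute)
  then have a: "(real m + 1) / 2^n \<le> 1" by simp
  have b: "0 \<le> real m / 2^n" by simp
  have "real m / 2^n \<le> x" "x < (real m + 1) / 2^n" using x by (auto simp: dyad_def)
  then have "0 \<le> x" "x < 1" using a b by linarith+
  then show "x \<in> {0..<1}" by simp
qed

lemma dyad_sub: assumes "n \<le> N" shows "dyad N m \<subseteq> dyad n (m div 2^(N-n))"
proof
  fix x assume x: "x \<in> dyad N m"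
  define e where "e = (2::nat)^(N-n)"
  define q where "q = m div e"
  have e0: "e > 0" by (simp add: e_def)
  have md: "m = q * e + m mod e" by (simp add: q_def)
  have ml: "m mod e < e" using e0 by simp
  have qm: "q * e \<le> m" "m + 1 \<le> (q + 1) * e"
    using md ml by (simp_all add: algebra_simps)
  have rq: "real q * real e \<le> real m" "real m + 1 \<le> (real q + 1) * real e"
    using qm by (metis of_nat_le_iff of_nat_mult, metis of_nat_1 of_nat_add of_nat_le_iff of_nat_mult)
  have NN: "(2::real)^N = 2^n * real e" by (simp add: e_def power_add[symmetric] assms)
  have xm: "real m \<le> 2^N * x" "2^N * x < real m + 1" using x by (auto simp: dyad_def field_simps)
  have "real q * real e \<le> (2^n * x) * real e" "(2^n * x) * real e < (real q + 1) * real e"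
  proof -
    have "2^N * x = (2^n * x) * real e" using NN by simp
    then show "real q * real e \<le> (2^n * x) * real e" "(2^n * x) * real e < (real q + 1) * real e"
      using xm rq by linarith+
  qed
  then have "real q \<le> 2^n * x" "2^n * x < real q + 1" using e0 by auto
  then show "x \<in> dyad n (m div 2^(N-n))" unfolding q_def e_def by (simp add: dyad_def field_simps)
qed

lemma div_lt_aux: "(L::int) < R * t \<Longrightarrow> R > 0 \<Longrightarrow> L div R < t"
  by (smt (verit) minus_mod_eq_mult_div mult_left_less_imp_less pos_mod_sign)

lemma child_count:
  fixes m n i' j' :: nat
  assumes ni: "n \<le> i'" and i1: "1 \<le> i'" and j1: "1 \<le> j'"
  shows "finite {m'. m' div 2^(i'+j'-n) = m \<and> m' \<in> Bset i' j'} \<and>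
         card {m'. m' div 2^(i'+j'-n) = m \<and> m' \<in> Bset i' j'} \<le> 12 * 2^(i'-n)"
proof -
  define c where "c = i' - n"
  define d where "d = c + j'"
  have dd: "i'+j'-n = d" using ni by (simp add: c_def d_def)
  define e :: nat where "e = 2^d"
  define a :: int where "a = 2^i' - 1"
  define R :: int where "R = 2^(i'+j')"
  define W :: int where "W = 2^i'"
  have W2: "(2::int)^(i'+1) = 2 * W" by (simp add: W_def)
  have aW: "a = W - 1" by (simp add: a_def W_def)
  have W2i: "(2::int) \<le> W" using i1 unfolding W_def
    by (metis power_increasing power_one_right zero_less_numeral one_le_numeral)
  have a1: "a \<ge> 1" using W2i aW by simp
  have e1: "int e \<ge> 1" by (simp add: e_def)
  have R0: "R > 0" by (simp add: R_def)
  have WR: "2 * W \<le> R" unfolding W_def R_def using j1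
    by (metis W2 W_def add_le_cancel_left one_le_numeral power_increasing)
  have WeR: "W * int e = R * 2^c" unfolding W_def R_def e_def d_def
    using ni by (simp add: power_add[symmetric] c_def)
  define Cs where "Cs p = {m'. m' div e = m \<and> p*R - 2*W + 1 \<le> a * int m' \<and> a * int m' \<le> p*R + W}" for p
  define P where "P = {p. Cs p \<noteq> {}}"
  have rng: "int m * int e \<le> int m'" "int m' \<le> int m * int e + int e - 1" if "m' div e = m" for m'
  proof -
    have e0: "e > 0" by (simp add: e_def)
    have "m' = m * e + m' mod e" using div_mult_mod_eq[of m' e] that by simp
    moreover have "m' mod e < e" using e0 by simp
    ultimately have "m * e \<le> m'" "m' + 1 \<le> m * e + e" by linarith+
    then have "int (m * e) \<le> int m'" "int (m' + 1) \<le> int (m * e + e)" by (simp only: of_nat_le_iff)+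
    then show "int m * int e \<le> int m'" "int m' \<le> int m * int e + int e - 1"
      by simp_all
  qed
  have T: "{m'. m' div 2^(i'+j'-n) = m \<and> m' \<in> Bset i' j'} = (\<Union>p\<in>P. Cs p)"
    unfolding dd P_def Cs_def Bset_def e_def R_def W2[symmetric] a_def W_def by auto
  have Cfin: "finite (Cs p) \<and> card (Cs p) \<le> 6" for p
  proof -
    have "finite (int ` Cs p) \<and> card (int ` Cs p) \<le> nat ((3*a+2) div a + 1)"
    proof (rule spread)
      show "a > 0" using a1 by simp
      fix x y assume "x \<in> int ` Cs p" "y \<in> int ` Cs p"
      then obtain x' y' where "x = int x'" "y = int y'" "x' \<in> Cs p" "y' \<in> Cs p" by blast
      then show "(x - y) * a \<le> 3 * a + 2" unfolding Cs_def using aW by (auto simp: algebra_simps)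
    qed
    moreover have "(3*a+2) div a \<le> (5*a) div a" using a1 by (intro zdiv_mono1) auto
    then have "(3*a+2) div a \<le> 5" using a1 by simp
    moreover have "card (int ` Cs p) = card (Cs p)" by (simp add: card_image)
    moreover have "finite (int ` Cs p) \<Longrightarrow> finite (Cs p)" by (simp add: finite_image_iff)
    ultimately show ?thesis by auto
  qed
  define L where "L = a * (int e - 1) + 3*W - 1"
  have Pfin: "finite P \<and> card P \<le> nat (L div R + 1)"
  proof (rule spread[OF R0])
    fix p1 p2 assume "p1 \<in> P" "p2 \<in> P"
    then obtain m1 m2 where m1: "m1 \<in> Cs p1" and m2: "m2 \<in> Cs p2" unfolding P_def by blast
    have h1: "p1 * R \<le> a * int m1 + 2*W - 1" "a * int m2 - W \<le> p2 * R"
      using m1 m2 unfolding Cs_def by auto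
    have "int m1 - int m2 \<le> int e - 1" using rng[of m1] rng[of m2] m1 m2 unfolding Cs_def by auto
    then have "a * (int m1 - int m2) \<le> a * (int e - 1)" using a1 by (intro mult_left_mono) auto
    then show "(p1 - p2) * R \<le> L" using h1 unfolding L_def by (simp add: algebra_simps)
  qed
  have "L = W * int e + 2 * W - int e" unfolding L_def aW by (simp add: algebra_simps)
  then have "L < R * (2^c + 1)" using WeR WR e1 by (simp add: algebra_simps)
  then have "L div R < 2^c + 1" using R0 by (rule div_lt_aux)
  moreover have "(1::int) \<le> 2^c" by simp
  ultimately have "L div R + 1 \<le> 2 * 2^c" by linarith
  then have "nat (L div R + 1) \<le> nat (2 * 2^c)" by (rule nat_mono)
  also have "nat (2 * 2^c :: int) = 2 * 2^c" by (simp add: nat_mult_distrib nat_power_eq)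
  finally have cP: "card P \<le> 2 * 2^c" using Pfin by linarith
  have fin: "finite (\<Union>p\<in>P. Cs p)" using Pfin Cfin by blast
  have "card (\<Union>p\<in>P. Cs p) \<le> (\<Sum>p\<in>P. card (Cs p))" using Pfin by (intro card_UN_le) blast
  also have "\<dots> \<le> card P * 6" using Cfin sum_bounded_above[of P "\<lambda>p. card (Cs p)" 6] by simp
  also have "\<dots> \<le> 12 * 2^c" using cP by simp
  finally show ?thesis using fin T by (simp add: c_def)
qed

lemma dyad_uniq: "x \<in> dyad n a \<Longrightarrow> x \<in> dyad n b \<Longrightarrow> a = b"
  by (simp add: dyad_iff)

lemma lev_le:
  fixes i j :: "nat \<Rightarrow> nat"
  assumes imono: "\<And>l. Suc l < k \<Longrightarrow> i l < i (Suc l)"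
    and gap: "\<And>l. Suc l < k \<Longrightarrow> int (i (Suc l)) - int (i l) \<ge> int (j l)"
  shows "l' < l \<Longrightarrow> l < k \<Longrightarrow> i l' + j l' \<le> i l"
proof (induction l)
  case 0 then show ?case by simp
next
  case (Suc l)
  have g: "i l + j l \<le> i (Suc l)" using gap[OF Suc.prems(2)] by linarith
  show ?case
  proof (cases "l' = l")
    case True then show ?thesis using g by simp
  next
    case False
    then have "i l' + j l' \<le> i l" using Suc by simp
    then show ?thesis using g by simp
  qed
qed

lemma i_ge1:
  fixes i :: "nat \<Rightarrow> nat"
  assumes i1: "1 \<le> i 0" and imono: "\<And>l. Suc l < k \<Longrightarrow> i l < i (Suc l)"
  shows "l < k \<Longrightarrow> 1 \<le> i l"
proof (induction l)
  case 0 then show ?case using i1 by simp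
next
  case (Suc l) then show ?case using imono[of l] by simp
qed

definition Aset :: "(nat \<Rightarrow> nat) \<Rightarrow> (nat \<Rightarrow> nat) \<Rightarrow> nat \<Rightarrow> nat set" where
  "Aset i j l = {m. m < 2^(i l + j l) \<and> (\<forall>l'\<le>l. m div 2^((i l + j l) - (i l' + j l')) \<in> Bset (i l') (j l'))}"

lemma Aset_count:
  fixes i j :: "nat \<Rightarrow> nat"
  assumes i1: "1 \<le> i 0"
    and imono: "\<And>l. Suc l < k \<Longrightarrow> i l < i (Suc l)"
    and jpos: "\<And>l. l < k \<Longrightarrow> j l \<ge> 1"
    and gap: "\<And>l. Suc l < k \<Longrightarrow> int (i (Suc l)) - int (i l) \<ge> int (j l)"
  shows "l < k \<Longrightarrow> finite (Aset i j l) \<and> card (Aset i j l) * 2^(\<Sum>l'<l. j l') \<le> 15^(Suc l) * 2^(i l)"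
proof (induction l)
  case 0
  have sub: "Aset i j 0 \<subseteq> {m'. m' div 2^(i 0 + j 0 - 0) = 0 \<and> m' \<in> Bset (i 0) (j 0)}"
    unfolding Aset_def by auto
  have cc: "finite {m'. m' div 2^(i 0 + j 0 - 0) = 0 \<and> m' \<in> Bset (i 0) (j 0)} \<and>
    card {m'. m' div 2^(i 0 + j 0 - 0) = 0 \<and> m' \<in> Bset (i 0) (j 0)} \<le> 12 * 2^(i 0 - 0)"
    using 0 i1 jpos[of 0] by (intro child_count) auto
  then have "finite (Aset i j 0)" "card (Aset i j 0) \<le> 12 * 2^(i 0)"
    using sub card_mono[OF _ sub] finite_subset[OF sub] by auto
  then show ?case by simp
next
  case (Suc l)
  let ?lev = "\<lambda>l. i l + j l"
  have lk: "l < k" using Suc by simp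
  have IH: "finite (Aset i j l)" "card (Aset i j l) * 2^(\<Sum>l'<l. j l') \<le> 15^(Suc l) * 2^(i l)"
    using Suc.IH lk by auto
  have g: "?lev l \<le> i (Suc l)" using lev_le[where k=k and i=i and j=j, OF imono gap, of l "Suc l"] Suc.prems by auto
  have levmono: "?lev l' \<le> ?lev l" if "l' \<le> l" for l'
    using lev_le[where k=k and i=i and j=j, OF imono gap, of l' l] that lk by (cases "l' = l") auto
  define D where "D = i (Suc l) + j (Suc l) - ?lev l"
  define Ch where "Ch m = {m'. m' div 2^D = m \<and> m' \<in> Bset (i (Suc l)) (j (Suc l))}" for m
  have chc: "finite (Ch m) \<and> card (Ch m) \<le> 12 * 2^(i (Suc l) - ?lev l)" for m
    unfolding Ch_def D_def
    using g i_ge1[where k=k and i=i, OF i1 imono Suc.prems] jpos[OF Suc.prems] by (intro child_count) auto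
  have sub: "Aset i j (Suc l) \<subseteq> (\<Union>m\<in>Aset i j l. Ch m)"
  proof
    fix m' assume m': "m' \<in> Aset i j (Suc l)"
    define m where "m = m' div 2^D"
    have LD: "?lev (Suc l) = ?lev l + D" using g by (simp add: D_def)
    have "m' < 2^(?lev l) * 2^D" using m' LD unfolding Aset_def by (simp add: power_add)
    then have mlt: "m < 2^(?lev l)" unfolding m_def by (rule less_mult_imp_div_less)
    have "m div 2^(?lev l - ?lev l') \<in> Bset (i l') (j l')" if "l' \<le> l" for l'
    proof -
      have e: "?lev (Suc l) - ?lev l' = D + (?lev l - ?lev l')" using LD levmono[OF that] by simp
      have "m div 2^(?lev l - ?lev l') = m' div 2^(?lev (Suc l) - ?lev l')"
        unfolding m_def e by (simp add: power_add div_mult2_eq)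
      moreover have "m' div 2^(?lev (Suc l) - ?lev l') \<in> Bset (i l') (j l')"
        using m' that unfolding Aset_def by auto
      ultimately show ?thesis by simp
    qed
    then have "m \<in> Aset i j l" using mlt unfolding Aset_def by auto
    moreover have "m' \<in> Ch m" using m' unfolding Ch_def m_def Aset_def by auto
    ultimately show "m' \<in> (\<Union>m\<in>Aset i j l. Ch m)" by blast
  qed
  have fin: "finite (\<Union>m\<in>Aset i j l. Ch m)" using IH(1) chc by blast
  have "card (Aset i j (Suc l)) \<le> card (\<Union>m\<in>Aset i j l. Ch m)" using fin sub by (rule card_mono)
  also have "\<dots> \<le> (\<Sum>m\<in>Aset i j l. card (Ch m))" using IH(1) by (intro card_UN_le)
  also have "\<dots> \<le> card (Aset i j l) * (12 * 2^(i (Suc l) - ?lev l))"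
    using chc sum_bounded_above[of "Aset i j l" "\<lambda>m. card (Ch m)" "12 * 2^(i (Suc l) - ?lev l)"] by simp
  finally have c1: "card (Aset i j (Suc l)) \<le> card (Aset i j l) * (12 * 2^(i (Suc l) - ?lev l))" .
  have pw: "2^(i l) * 2^(j l) * 2^(i (Suc l) - ?lev l) = (2::nat)^(i (Suc l))"
    using g by (simp add: power_add[symmetric])
  have "card (Aset i j (Suc l)) * 2^(\<Sum>l'<Suc l. j l')
      \<le> card (Aset i j l) * (12 * 2^(i (Suc l) - ?lev l)) * (2^(\<Sum>l'<l. j l') * 2^(j l))"
    using c1 by (simp add: power_add)
  also have "\<dots> = (card (Aset i j l) * 2^(\<Sum>l'<l. j l')) * (12 * 2^(j l) * 2^(i (Suc l) - ?lev l))"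
    by (simp add: algebra_simps)
  also have "\<dots> \<le> (15^(Suc l) * 2^(i l)) * (12 * 2^(j l) * 2^(i (Suc l) - ?lev l))"
    using IH(2) by (rule mult_right_mono) simp
  also have "\<dots> = 12 * 15^(Suc l) * (2^(i l) * 2^(j l) * 2^(i (Suc l) - ?lev l))"
    by (simp add: algebra_simps)
  also have "\<dots> = 12 * 15^(Suc l) * 2^(i (Suc l))" using pw by simp
  also have "\<dots> \<le> 15^(Suc (Suc l)) * 2^(i (Suc l))" by simp
  finally show ?case using fin sub finite_subset by blast
qed

theorem lemma4p4:
  fixes k :: nat and i j :: "nat \<Rightarrow> nat" and M :: real
  assumes M: "M = 15"
    and k: "k \<ge> 1"
    and i1: "1 \<le> i 0"
    and imono: "\<And>l. Suc l < k \<Longrightarrow> i l < i (Suc l)"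
    and jpos: "\<And>l. l < k \<Longrightarrow> j l \<ge> 1"
    and gap: "\<And>l. Suc l < k \<Longrightarrow> int (i (Suc l)) - int (i l) \<ge> int (j l)"
  shows "\<exists>S. S \<subseteq> Dn (i (k - 1) + j (k - 1)) \<and> finite S \<and>
           Qhat_inter k i j = \<Union> S \<and>
           real (card S) \<le> M ^ k * 2 powr (real (i (k - 1)) - (\<Sum>l<k - 1. real (j l)))"
proof -
  define N where "N = i (k - 1) + j (k - 1)"
  have levN: "i l + j l \<le> N" if "l < k" for l
  proof (cases "l = k - 1")
    case True then show ?thesis by (simp add: N_def)
  next
    case False
    then have "i l + j l \<le> i (k - 1)" using that k
      by (intro lev_le[where k=k and i=i and j=j, OF imono gap]) auto
    then show ?thesis by (simp add: N_def)
  qed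
  define A where "A = {m. m < 2^N \<and> dyad N m \<subseteq> Qhat_inter k i j}"
  define S where "S = dyad N ` A"
  have QhatE: "\<exists>m''. m'' < 2^(i l + j l) \<and> x \<in> dyad (i l + j l) m'' \<and> dyad (i l + j l) m'' \<inter> Q (i l) (j l) \<noteq> {}"
    if "x \<in> Qhat (i l) (j l)" for x l
    using that unfolding Qhat_def Dn_def by auto
  have S1: "S \<subseteq> Dn N" unfolding S_def A_def Dn_def by auto
  have S2: "finite S" unfolding S_def A_def by simp
  have S3: "Qhat_inter k i j = \<Union> S"
  proof
    show "\<Union> S \<subseteq> Qhat_inter k i j" unfolding S_def A_def by auto
  next
    show "Qhat_inter k i j \<subseteq> \<Union> S"
    proof
      fix x assume x: "x \<in> Qhat_inter k i j"
      then have xl: "x \<in> Qhat (i l) (j l)" if "l < k" for l using that by (auto simp: Qhat_inter_def)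
      obtain m0 where "m0 < 2^(i 0 + j 0)" "x \<in> dyad (i 0 + j 0) m0"
        using QhatE[OF xl[of 0]] k by auto
      then have x01: "x \<in> {0..<1}" using dyad_01 by blast
      define m where "m = nat \<lfloor>2^N * x\<rfloor>"
      have fl0: "0 \<le> \<lfloor>2^N * x\<rfloor>" using x01 by simp
      have xm: "x \<in> dyad N m" using x01 fl0 by (simp add: dyad_iff m_def)
      have "2^N * x < 2^N" using x01 by simp
      then have "\<lfloor>2^N * x\<rfloor> < 2^N" by (simp add: floor_less_iff)
      then have mN: "m < 2^N" unfolding m_def using fl0
        by (metis nat_less_iff of_nat_numeral of_nat_power)
      have "dyad N m \<subseteq> Qhat (i l) (j l)" if l: "l < k" for l
      proof -
        obtain m'' where m'': "m'' < 2^(i l + j l)" "x \<in> dyad (i l + j l) m''"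
          "dyad (i l + j l) m'' \<inter> Q (i l) (j l) \<noteq> {}"
          using QhatE[OF xl[OF l]] by blast
        have sb: "dyad N m \<subseteq> dyad (i l + j l) (m div 2^(N - (i l + j l)))"
          using levN[OF l] by (rule dyad_sub)
        have "m div 2^(N - (i l + j l)) = m''" using sb xm m''(2) dyad_uniq by blast
        then have "dyad N m \<subseteq> dyad (i l + j l) m''" using sb by simp
        moreover have "dyad (i l + j l) m'' \<subseteq> Qhat (i l) (j l)"
          unfolding Qhat_def Dn_def using m'' by blast
        ultimately show ?thesis by blast
      qed
      then have "dyad N m \<subseteq> Qhat_inter k i j" by (auto simp: Qhat_inter_def)
      then have "m \<in> A" using mN by (simp add: A_def)
      then show "x \<in> \<Union> S" using xm unfolding S_def by blast
    qed
  qed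
  have AA: "A \<subseteq> Aset i j (k - 1)"
  proof
    fix m assume m: "m \<in> A"
    have "m div 2^(N - (i l' + j l')) \<in> Bset (i l') (j l')" if l': "l' \<le> k - 1" for l'
    proof -
      have lk: "l' < k" using l' k by simp
      define x where "x = real m / 2^N"
      have xm: "x \<in> dyad N m" unfolding x_def by (rule dyad_pt)
      then have "x \<in> Qhat (i l') (j l')" using m lk by (auto simp: A_def Qhat_inter_def)
      then obtain m'' where m'': "m'' < 2^(i l' + j l')" "x \<in> dyad (i l' + j l') m''"
          "dyad (i l' + j l') m'' \<inter> Q (i l') (j l') \<noteq> {}"
          using QhatE by blast
      have "x \<in> dyad (i l' + j l') (m div 2^(N - (i l' + j l')))"
        using dyad_sub[OF levN[OF lk]] xm by blast
      then have "m div 2^(N - (i l' + j l')) = m''" using m''(2) dyad_uniq by blast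
      then obtain y where "y \<in> dyad (i l' + j l') (m div 2^(N - (i l' + j l')))" "y \<in> Q (i l') (j l')"
        using m''(3) by blast
      then show ?thesis by (rule Q_B)
    qed
    then show "m \<in> Aset i j (k - 1)" using m unfolding Aset_def A_def N_def by auto
  qed
  have km: "k - 1 < k" using k by simp
  have AC: "finite (Aset i j (k - 1)) \<and> card (Aset i j (k - 1)) * 2^(\<Sum>l<k - 1. j l) \<le> 15^(Suc (k - 1)) * 2^(i (k - 1))"
    using Aset_count[where k=k and i=i and j=j, OF i1 imono jpos gap km] by blast
  have "card S \<le> card A" unfolding S_def by (rule card_image_le) (simp add: A_def)
  also have "\<dots> \<le> card (Aset i j (k - 1))" using AC AA by (intro card_mono) auto
  finally have cS: "card S \<le> card (Aset i j (k - 1))" .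
  define s where "s = (\<Sum>l<k - 1. j l)"
  have kk: "Suc (k - 1) = k" using k by simp
  have "real (card S) * 2^s \<le> real (card (Aset i j (k - 1))) * 2^s" using cS by simp
  also have "\<dots> = real (card (Aset i j (k - 1)) * 2^s)" by simp
  also have "\<dots> \<le> real (15^k * 2^(i (k - 1)))" using AC kk s_def by (simp only: of_nat_le_iff)
  finally have r: "real (card S) * 2^s \<le> 15^k * 2^(i (k - 1))" by simp
  have "(\<Sum>l<k - 1. real (j l)) = real s" by (simp add: s_def)
  then have "2 powr (real (i (k - 1)) - (\<Sum>l<k - 1. real (j l))) = 2^(i (k - 1)) / 2^s"
    by (simp add: powr_diff powr_realpow)
  moreover have "real (card S) \<le> 15^k * 2^(i (k - 1)) / 2^s" using r by (simp add: field_simps)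
  ultimately have "real (card S) \<le> M ^ k * 2 powr (real (i (k - 1)) - (\<Sum>l<k - 1. real (j l)))"
    using M by simp
  then show ?thesis using S1 S2 S3 unfolding N_def by blast
qed

end
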